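(* Let $\mathbf{E}$ be the all-ones matrix, and for data $\mathbf{D}\in\mathbb{R}^{n\times n}$, positive integers $k_0,k_1$, hyperparameters $\lambda,\mu>0$, and bounds $\beta,\gamma>0$ consider the relaxation $$\begin{aligned}\text{(A)}\quad \min_{\mathbf{X}, \mathbf{Y}, \mathbf{V}, \mathbf{W}_1, \mathbf{W}_2 \in \mathbb{R}^{n \times n}} \ & \Vert\mathbf{D} - \mathbf{X} - \mathbf{Y}\Vert_F^2 + \lambda \Vert \mathbf{X} \Vert_F^2 + \mu \Vert \mathbf{Y} \Vert_F^2 \\ \text{s.t.}\ & -\mathbf{V} \leq \mathbf{Y} \leq \mathbf{V},\ \tfrac{1}{\gamma} \langle \mathbf{E}, \mathbf{V}\rangle \leq k_1,\ \tfrac{1}{2\beta} \mathrm{tr}(\mathbf{W}_1)+\tfrac{1}{2\beta}\mathrm{tr}(\mathbf{W}_2) \leq k_0,\ \begin{pmatrix}\mathbf{W}_1 & \mathbf{X}\\ \mathbf{X}^T & \mathbf{W}_2\end{pmatrix} \succeq 0,\end{aligned}$$ and the relaxation $$\begin{aligned}\text{(B)}\quad \min_{\mathbf{X}, \mathbf{Y}, \mathbf{Z}, \mathbf{P}_c, \mathbf{P}_r, \mathbf{\Theta}, \boldsymbol{\alpha} \in \mathbb{R}^{n \times n}} \ & \Vert\mathbf{D} - \mathbf{X} - \mathbf{Y}\Vert_F^2 + \lambda\, \mathrm{tr}(\mathbf{\Theta}) + \mu \langle \mathbf{E}, \boldsymbol{\alpha}\rangle \\ \text{s.t.}\ & \mathbf{Y}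 \circ \mathbf{Y} \leq \boldsymbol{\alpha} \circ \mathbf{Z},\ \langle \mathbf{E}, \mathbf{Z}\rangle \leq k_1,\ \mathbf{0} \leq \mathbf{Z} \leq \mathbf{E},\ -\gamma \mathbf{Z} \leq\mathbf{Y} \leq \gamma \mathbf{Z},\\ & \mathbf{P}_c \succeq 0,\ \mathbb{I} - \mathbf{P}_c \succeq 0,\ \mathrm{tr}(\mathbf{P}_c) \leq k_0,\ \mathbf{P}_r \succeq 0,\ \mathbb{I} - \mathbf{P}_r \succeq 0,\ \mathrm{tr}(\mathbf{P}_r) \leq k_0,\\ & \begin{pmatrix}\mathbf{\Theta} & \mathbf{X}\\ \mathbf{X}^T & \mathbf{P}_c\end{pmatrix} \succeq 0,\ \begin{pmatrix}\beta\mathbf{P}_r & \mathbf{X}\\ \mathbf{X}^T & \beta\mathbf{P}_c\end{pmatrix} \succeq 0.\end{aligned}$$ There exist input data $\mathbf{D}, k_0, k_1$ and hyperparameters $\lambda, \mu$ (and bounds $\beta,\gamma$) such that the optimal value of (B) is strictly greater than the optimal value of (A).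
   Context: Both (A) and (B) are convex relaxations of the sparse plus low-rank problem $\min_{\mathbf{X},\mathbf{Y}} \Vert\mathbf{D}-\mathbf{X}-\mathbf{Y}\Vert_F^2+\lambda\Vert\mathbf{X}\Vert_F^2+\mu\Vert\mathbf{Y}\Vert_F^2$ s.t. $\mathrm{Rank}(\mathbf{X})\le k_0$, $\Vert\mathbf{Y}\Vert_0\le k_1$, under the assumptions that the spectral norm of $\mathbf{X}$ is at most $\beta$ and the entrywise $\ell_\infty$ norm of $\mathbf{Y}$ is at most $\gamma$. (A) is the relaxation of Lee and Zou; (B) is the paper's strengthened perspective relaxation. $\circ$ denotes the Hadamard product, matrix inequalities are entrywise except $\succeq$ (positive semidefiniteness), and $\mathbb{I}$ is the identity. It is separately known that the optimal value of (B) is always at least that of (A). *)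

theory Defs
  imports "Jordan_Normal_Form.Matrix"
begin

definition mtrace :: "real mat \<Rightarrow> real" where
  "mtrace A = (\<Sum>i<dim_row A. A $$ (i,i))"

text \<open>Frobenius inner product with the all-ones matrix E: sum of all entries.\<close>
definition sum_entries :: "real mat \<Rightarrow> real" where
  "sum_entries A = (\<Sum>i<dim_row A. \<Sum>j<dim_col A. A $$ (i,j))"

definition frob_sq :: "real mat \<Rightarrow> real" where
  "frob_sq A = (\<Sum>i<dim_row A. \<Sum>j<dim_col A. (A $$ (i,j))^2)"

definition mat_le :: "nat \<Rightarrow> real mat \<Rightarrow> real mat \<Rightarrow> bool" where
  "mat_le n A B = (\<forall>i<n. \<forall>j<n. A $$ (i,j) \<le> B $$ (i,j))"

definition psd :: "nat \<Rightarrow> real mat \<Rightarrow> bool" where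
  "psd m A = (A \<in> carrier_mat m m \<and> A\<^sup>T = A \<and>
     (\<forall>v \<in> carrier_vec m. v \<bullet> (A *\<^sub>v v) \<ge> 0))"

definition all_ones :: "nat \<Rightarrow> real mat" where
  "all_ones n = mat n n (\<lambda>_. 1)"

definition feasA_vals :: "nat \<Rightarrow> real mat \<Rightarrow> nat \<Rightarrow> nat \<Rightarrow> real \<Rightarrow> real \<Rightarrow> real \<Rightarrow> real \<Rightarrow> real set" where
  "feasA_vals n D k0 k1 lam mu beta gamma =
    {frob_sq (D - X - Y) + lam * frob_sq X + mu * frob_sq Y | X Y V W1 W2.
       X \<in> carrier_mat n n \<and> Y \<in> carrier_mat n n \<and> V \<in> carrier_mat n n \<and>
       W1 \<in> carrier_mat n n \<and> W2 \<in> carrier_mat n n \<and>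
       mat_le n (- V) Y \<and> mat_le n Y V \<and>
       (1 / gamma) * sum_entries V \<le> real k1 \<and>
       (1 / (2 * beta)) * mtrace W1 + (1 / (2 * beta)) * mtrace W2 \<le> real k0 \<and>
       psd (2 * n) (four_block_mat W1 X (X\<^sup>T) W2)}"

definition optA :: "nat \<Rightarrow> real mat \<Rightarrow> nat \<Rightarrow> nat \<Rightarrow> real \<Rightarrow> real \<Rightarrow> real \<Rightarrow> real \<Rightarrow> real" where
  "optA n D k0 k1 lam mu beta gamma = Inf (feasA_vals n D k0 k1 lam mu beta gamma)"

text \<open>Strengthened perspective relaxation (B). The perspective constraint
  Y o Y <= alpha o Z is read as the rotated second-order cone constraint,
  which includes alpha >= 0.\<close>
definition feasB_vals :: "nat \<Rightarrow> real mat \<Rightarrow> nat \<Rightarrow> nat \<Rightarrow> real \<Rightarrow> real \<Rightarrow> real \<Rightarrow> real \<Rightarrow> real set" where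
  "feasB_vals n D k0 k1 lam mu beta gamma =
    {frob_sq (D - X - Y) + lam * mtrace Theta + mu * sum_entries alpha | X Y Z Pc Pr Theta alpha.
       X \<in> carrier_mat n n \<and> Y \<in> carrier_mat n n \<and> Z \<in> carrier_mat n n \<and>
       Pc \<in> carrier_mat n n \<and> Pr \<in> carrier_mat n n \<and> Theta \<in> carrier_mat n n \<and>
       alpha \<in> carrier_mat n n \<and>
       (\<forall>i<n. \<forall>j<n. (Y $$ (i,j))^2 \<le> alpha $$ (i,j) * Z $$ (i,j) \<and> 0 \<le> alpha $$ (i,j)) \<and>
       sum_entries Z \<le> real k1 \<and>
       mat_le n (0\<^sub>m n n) Z \<and> mat_le n Z (all_ones n) \<and>
       mat_le n (- (gamma \<cdot>\<^sub>m Z)) Y \<and> mat_le n Y (gamma \<cdot>\<^sub>m Z) \<and>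
       psd n Pc \<and> psd n (1\<^sub>m n - Pc) \<and> mtrace Pc \<le> real k0 \<and>
       psd n Pr \<and> psd n (1\<^sub>m n - Pr) \<and> mtrace Pr \<le> real k0 \<and>
       psd (2 * n) (four_block_mat Theta X (X\<^sup>T) Pc) \<and>
       psd (2 * n) (four_block_mat (beta \<cdot>\<^sub>m Pr) X (X\<^sup>T) (beta \<cdot>\<^sub>m Pc))}"

definition optB :: "nat \<Rightarrow> real mat \<Rightarrow> nat \<Rightarrow> nat \<Rightarrow> real \<Rightarrow> real \<Rightarrow> real \<Rightarrow> real \<Rightarrow> real" where
  "optB n D k0 k1 lam mu beta gamma = Inf (feasB_vals n D k0 k1 lam mu beta gamma)"

end

theory Submission imports Defs begin

lemma qf2: assumes "A \<in> carrier_mat 2 2" "v \<in> carrier_vec 2"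
  shows "v \<bullet> (A *\<^sub>v v) = v$0*(A$$(0,0)*v$0 + A$$(0,1)*v$1) + v$1*(A$$(1,0)*v$0 + A$$(1,1)*v$1)"
  using assms by (simp add: scalar_prod_def mult_mat_vec_def row_def numeral_2_eq_2 algebra_simps)

lemma qf1: assumes "A \<in> carrier_mat 1 1" "v \<in> carrier_vec 1"
  shows "v \<bullet> (A *\<^sub>v v) = v$0*A$$(0,0)*v$0"
  using assms by (simp add: scalar_prod_def mult_mat_vec_def row_def mult.assoc)

lemma psd2_use: assumes "psd 2 A" shows "a*(A$$(0,0)*a + A$$(0,1)*b) + b*(A$$(1,0)*a + A$$(1,1)*b) \<ge> 0"
proof -
  let ?v = "vec 2 (\<lambda>i. if i = 0 then a else b) :: real vec"
  have "?v \<bullet> (A *\<^sub>v ?v) \<ge> 0" using assms unfolding psd_def by auto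
  thus ?thesis using assms unfolding psd_def by (subst (asm) qf2) auto
qed

lemma psd1_use: assumes "psd 1 A" shows "A$$(0,0) \<ge> 0"
proof -
  let ?v = "vec 1 (\<lambda>i. 1) :: real vec"
  have "?v \<bullet> (A *\<^sub>v ?v) \<ge> 0" using assms unfolding psd_def by auto
  thus ?thesis using assms unfolding psd_def by (subst (asm) qf1) auto
qed

definition cm :: "real \<Rightarrow> real mat" where "cm c = mat 1 1 (\<lambda>_. c)"

lemma cm_carrier[simp]: "cm c \<in> carrier_mat 1 1" by (simp add: cm_def)
lemma cm_dims[simp]: "dim_row (cm c) = 1" "dim_col (cm c) = 1" by (simp_all add: cm_def)
lemma cm_idx[simp]: "cm c $$ (0,0) = c" by (simp add: cm_def)

lemma frob_nonneg: "frob_sq A \<ge> 0"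
  unfolding frob_sq_def by (intro sum_nonneg) auto

lemma frob1: "A \<in> carrier_mat 1 1 \<Longrightarrow> frob_sq A = (A$$(0,0))^2"
  by (simp add: frob_sq_def)

lemma frob_cm[simp]: "frob_sq (cm c) = c^2" by (simp add: frob_sq_def)
lemma mtrace_cm[simp]: "mtrace (cm c) = c" by (simp add: mtrace_def)
lemma se_cm[simp]: "sum_entries (cm c) = c" by (simp add: sum_entries_def)

lemma A_mem: "54 \<in> feasA_vals 1 (cm 10) 2 1 1 1 1 1"
proof -
  let ?F = "four_block_mat (cm 2) (cm 2) ((cm 2)\<^sup>T) (cm 2)"
  have "?F \<in> carrier_mat (1+1) (1+1)" by (rule four_block_carrier_mat[OF cm_carrier cm_carrier])
  hence F: "?F \<in> carrier_mat 2 2" by (simp add: numeral_2_eq_2)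
  have Fi: "?F $$ (i,j) = 2" if "i < 2" "j < 2" for i j
    using that by (auto simp: cm_def)
  have psdF: "psd (2*1) ?F"
    unfolding psd_def
  proof (intro conjI ballI)
    show "?F \<in> carrier_mat (2*1) (2*1)" using F by simp
    show "?F\<^sup>T = ?F"
    proof (rule eq_matI)
      fix i j assume ij: "i < dim_row ?F" "j < dim_col ?F"
      hence ij2: "i < 2" "j < 2" using F by auto
      have "?F\<^sup>T $$ (i,j) = ?F $$ (j,i)" using F ij2 by (intro index_transpose_mat(1)) auto
      also have "\<dots> = 2" using Fi ij2 by blast
      also have "\<dots> = ?F $$ (i,j)" using Fi ij2 by metis
      finally show "?F\<^sup>T $$ (i,j) = ?F $$ (i,j)" .
    qed (use F in auto)
    fix v :: "real vec" assume v: "v \<in> carrier_vec (2*1)"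
    have v2: "v \<in> carrier_vec 2" using v by simp
    have e: "?F$$(0,0) = 2" "?F$$(0,1) = 2" "?F$$(1,0) = 2" "?F$$(1,1) = 2" using Fi by auto
    have "v \<bullet> (?F *\<^sub>v v) = v$0*(?F$$(0,0)*v$0 + ?F$$(0,1)*v$1) + v$1*(?F$$(1,0)*v$0 + ?F$$(1,1)*v$1)"
      by (rule qf2[OF F v2])
    also have "\<dots> = 2 * (v$0 + v$1)^2" unfolding e by (simp add: power2_eq_square algebra_simps)
    finally have "v \<bullet> (?F *\<^sub>v v) = 2 * (v$0 + v$1)^2" .
    thus "v \<bullet> (?F *\<^sub>v v) \<ge> 0" by simp
  qed
  have "frob_sq (cm 10 - cm 2 - cm 1) + 1 * frob_sq (cm 2) + 1 * frob_sq (cm 1) = 54"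
  proof -
    have "(cm 10 - cm 2 - cm 1) $$ (0,0) = 7" by (simp add: cm_def)
    moreover have "cm 10 - cm 2 - cm 1 \<in> carrier_mat 1 1" by (rule minus_carrier_mat[OF cm_carrier])
    ultimately have "frob_sq (cm 10 - cm 2 - cm 1) = 7^2" using frob1[of "cm 10 - cm 2 - cm 1"] by metis
    thus ?thesis by simp
  qed
  moreover have "mat_le 1 (- cm 1) (cm 1) \<and> mat_le 1 (cm 1) (cm 1)"
    by (simp add: mat_le_def cm_def)
  moreover have "(1 / 1) * sum_entries (cm 1) \<le> real 1"
    by (simp add: sum_entries_def cm_def)
  moreover have "(1 / (2 * 1)) * mtrace (cm 2) + (1 / (2 * 1)) * mtrace (cm 2) \<le> real 2"
    by (simp add: mtrace_def cm_def)
  ultimately show ?thesis unfolding feasA_vals_def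
    using psdF by (intro CollectI exI[of _ "cm 2"] exI[of _ "cm 1"] exI[of _ "cm 1"] exI[of _ "cm 2"] exI[of _ "cm 2"]) auto
qed

lemma optA_le: "optA 1 (cm 10) 2 1 1 1 1 1 \<le> 54"
  unfolding optA_def
proof (rule cInf_lower[OF A_mem])
  show "bdd_below (feasA_vals 1 (cm 10) 2 1 1 1 1 1)"
    unfolding feasA_vals_def
    by (rule bdd_belowI[of _ 0]) (auto intro!: add_nonneg_nonneg frob_nonneg)
qed

lemma B_core:
  fixes X Y Z Pc Pr Theta alpha :: "real mat"
  assumes c: "X \<in> carrier_mat 1 1" "Y \<in> carrier_mat 1 1" "Z \<in> carrier_mat 1 1"
       "Pc \<in> carrier_mat 1 1" "Pr \<in> carrier_mat 1 1" "Theta \<in> carrier_mat 1 1"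
       "alpha \<in> carrier_mat 1 1"
    and al: "\<forall>i<1. \<forall>j<1. (Y $$ (i,j))^2 \<le> alpha $$ (i,j) * Z $$ (i,j) \<and> 0 \<le> alpha $$ (i,j)"
    and Z: "mat_le 1 Z (all_ones 1)" "mat_le 1 Y (1 \<cdot>\<^sub>m Z)"
    and P: "psd 1 (1\<^sub>m 1 - Pc)" "psd 1 (1\<^sub>m 1 - Pr)"
    and T: "psd (2 * 1) (four_block_mat Theta X (X\<^sup>T) Pc)"
    and Q: "psd (2 * 1) (four_block_mat (1 \<cdot>\<^sub>m Pr) X (X\<^sup>T) (1 \<cdot>\<^sub>m Pc))"
  shows "frob_sq (cm 10 - X - Y) + 1 * mtrace Theta + 1 * sum_entries alpha \<ge> 64"
proof -
  have al0: "0 \<le> alpha $$ (0,0)" using al by simp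
  have y: "Y$$(0,0) \<le> 1" using Z c by (auto simp: mat_le_def all_ones_def)
  have "0 \<le> (1\<^sub>m 1 - Pc) $$ (0,0)" using psd1_use[OF P(1)] .
  hence pc: "Pc$$(0,0) \<le> 1" using c by simp
  have "0 \<le> (1\<^sub>m 1 - Pr) $$ (0,0)" using psd1_use[OF P(2)] .
  hence pr: "Pr$$(0,0) \<le> 1" using c by simp
  have Q2: "psd 2 (four_block_mat (1 \<cdot>\<^sub>m Pr) X (X\<^sup>T) (1 \<cdot>\<^sub>m Pc))" using Q by simp
  have T2: "psd 2 (four_block_mat Theta X (X\<^sup>T) Pc)" using T by simp
  have "0 \<le> 1*((four_block_mat (1 \<cdot>\<^sub>m Pr) X (X\<^sup>T) (1 \<cdot>\<^sub>m Pc))$$(0,0)*1 + (four_block_mat (1 \<cdot>\<^sub>m Pr) X (X\<^sup>T) (1 \<cdot>\<^sub>m Pc))$$(0,1)*(-1))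
     + (-1)*((four_block_mat (1 \<cdot>\<^sub>m Pr) X (X\<^sup>T) (1 \<cdot>\<^sub>m Pc))$$(1,0)*1 + (four_block_mat (1 \<cdot>\<^sub>m Pr) X (X\<^sup>T) (1 \<cdot>\<^sub>m Pc))$$(1,1)*(-1))"
    by (rule psd2_use[OF Q2])
  hence "0 \<le> Pr$$(0,0) - X$$(0,0) - X$$(0,0) + Pc$$(0,0)" using c by simp
  hence x: "X$$(0,0) \<le> 1" using pc pr by simp
  have "0 \<le> 1*((four_block_mat Theta X (X\<^sup>T) Pc)$$(0,0)*1 + (four_block_mat Theta X (X\<^sup>T) Pc)$$(0,1)*0)
     + 0*((four_block_mat Theta X (X\<^sup>T) Pc)$$(1,0)*1 + (four_block_mat Theta X (X\<^sup>T) Pc)$$(1,1)*0)"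
    by (rule psd2_use[OF T2])
  hence th: "Theta$$(0,0) \<ge> 0" using c by simp
  have m: "cm 10 - X - Y \<in> carrier_mat 1 1" using c(2) by (rule minus_carrier_mat)
  have e: "(cm 10 - X - Y) $$ (0,0) = 10 - X$$(0,0) - Y$$(0,0)" using c by simp
  have "frob_sq (cm 10 - X - Y) = (10 - X$$(0,0) - Y$$(0,0))^2"
    using frob1[OF m] e by simp
  moreover have "mtrace Theta = Theta$$(0,0)" using c by (simp add: mtrace_def)
  moreover have "sum_entries alpha = alpha$$(0,0)" using c by (simp add: sum_entries_def)
  moreover have "(10 - X$$(0,0) - Y$$(0,0))^2 \<ge> 8^2"
    using x y by (intro power_mono) auto
  ultimately show ?thesis using th al0 by simp
qed

lemma B_lower:
  assumes "t \<in> feasB_vals 1 (cm 10) 2 1 1 1 1 1" shows "t \<ge> 64"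
  using assms unfolding feasB_vals_def mem_Collect_eq
  apply (elim exE conjE)
  subgoal for X Y Z Pc Pr Theta alpha
    using B_core[of X Y Z Pc Pr Theta alpha] by simp
  done

lemma B_nonempty: "feasB_vals 1 (cm 10) 2 1 1 1 1 1 \<noteq> {}"
proof -
  define Om :: "real mat" where "Om = 0\<^sub>m 1 1"
  have Oc: "Om \<in> carrier_mat 1 1" by (simp add: Om_def)
  have z: "psd (2*1) (four_block_mat Om Om (Om\<^sup>T) Om)"
    unfolding psd_def Om_def by (auto simp: scalar_prod_def)
  have z': "psd (2*1) (four_block_mat (1 \<cdot>\<^sub>m Om) Om (Om\<^sup>T) (1 \<cdot>\<^sub>m Om))"
  proof -
    have "1 \<cdot>\<^sub>m Om = Om" by (auto simp: Om_def)
    thus ?thesis using z by simp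
  qed
  have z0: "psd 1 Om"
    unfolding psd_def Om_def by (auto simp: scalar_prod_def)
  have o: "psd 1 (1\<^sub>m 1 - Om)"
    unfolding psd_def
  proof (intro conjI ballI)
    have Mc: "1\<^sub>m 1 - Om \<in> carrier_mat 1 1" by (rule minus_carrier_mat[OF Oc])
    thus "1\<^sub>m 1 - Om \<in> carrier_mat 1 1" .
    show "(1\<^sub>m 1 - Om)\<^sup>T = 1\<^sub>m 1 - Om" by (auto simp: Om_def)
    fix v :: "real vec" assume v: "v \<in> carrier_vec 1"
    have "(1\<^sub>m 1 - Om) $$ (0,0) = 1" by (simp add: Om_def)
    hence "v \<bullet> ((1\<^sub>m 1 - Om) *\<^sub>v v) = v$0 * v$0" using qf1[OF Mc v] by simp
    thus "0 \<le> v \<bullet> ((1\<^sub>m 1 - Om) *\<^sub>v v)" by simp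
  qed
  have mle: "mat_le 1 Om Om" "mat_le 1 Om (all_ones 1)" "mat_le 1 (- (1 \<cdot>\<^sub>m Om)) Om" "mat_le 1 Om (1 \<cdot>\<^sub>m Om)"
    by (auto simp: mat_le_def all_ones_def Om_def)
  have mle0: "mat_le 1 (0\<^sub>m 1 1) Om" by (auto simp: mat_le_def Om_def)
  have se: "sum_entries Om \<le> real 1" "mtrace Om \<le> real 2" by (auto simp: sum_entries_def mtrace_def Om_def)
  have al: "\<forall>i<1. \<forall>j<1. (Om $$ (i,j))^2 \<le> Om $$ (i,j) * Om $$ (i,j) \<and> 0 \<le> Om $$ (i,j)"
    by (simp add: Om_def)
  have "frob_sq (cm 10 - Om - Om) + 1 * mtrace Om + 1 * sum_entries Om \<in> feasB_vals 1 (cm 10) 2 1 1 1 1 1"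
    unfolding feasB_vals_def mem_Collect_eq
    apply (rule exI[of _ Om])+
    apply (rule conjI[OF refl])
    apply (intro conjI; (rule Oc al se mle mle0 z0 o z z'))
    done
  thus ?thesis by blast
qed

lemma optB_ge: "optB 1 (cm 10) 2 1 1 1 1 1 \<ge> 64"
  unfolding optB_def by (rule cInf_greatest[OF B_nonempty B_lower])

theorem proposition12:
  shows "\<exists>(n::nat) (D::real mat) (k0::nat) (k1::nat) (lam::real) (mu::real) (beta::real) (gamma::real).
    D \<in> carrier_mat n n \<and> 0 < k0 \<and> 0 < k1 \<and> 0 < lam \<and> 0 < mu \<and> 0 < beta \<and> 0 < gamma \<and>
    optB n D k0 k1 lam mu beta gamma > optA n D k0 k1 lam mu beta gamma"
proof -
  have "optA 1 (cm 10) 2 1 1 1 1 1 < optB 1 (cm 10) 2 1 1 1 1 1"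
    using optA_le optB_ge by linarith
  then have "cm 10 \<in> carrier_mat 1 1 \<and> 0 < (2::nat) \<and> 0 < (1::nat) \<and> 0 < (1::real) \<and> 0 < (1::real) \<and> 0 < (1::real) \<and> 0 < (1::real) \<and>
    optB 1 (cm 10) 2 1 1 1 1 1 > optA 1 (cm 10) 2 1 1 1 1 1" by (intro conjI cm_carrier) simp_all
  thus ?thesis by blast
qed

end
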